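(* Assume $M$ has genus zero, let $a\in(0,1)$, $b=1-a$, and $p=\frac{q'}{q'+a^{-1}-1}$. Let $\omega\subseteq\mathsf E$ be distributed according to the $\mathrm{FK}(qq')$ random cluster model on $\mathsf G$ with parameter $p$ and free boundary conditions, i.e. $\propto (qq')^{k(\omega)}p^{|\omega|}(1-p)^{|\mathsf E\setminus\omega|}$. Independently assign to each cluster of $\omega$ a spin chosen uniformly from $Q$, and to each cluster of $\omega^\dagger$ (in $\mathsf G^*$) a spin chosen uniformly from $Q'$, all independently, and let $\sigma:\mathsf V\to Q$, $\sigma':\mathsf U\to Q'$ be the resulting spin configurations. Then $(\sigma,\sigma')$ has law $\mathbf P(\sigma,\sigma')\propto a^{|\eta(\sigma')|}b^{|\eta(\sigma)|}$ on $\Sigma$.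
   Context: $M$ is the sphere or the plane. Let $\mathsf G=(\mathsf V,\mathsf E)$ be a finite connected graph embedded in $M$ with all faces topological discs, and $\mathsf G^*=(\mathsf U,\mathsf E^* )$ its embedded dual ($\mathsf U$ = faces of $\mathsf G$); $e^*$ is the dual edge crossing $e$, $\xi^*=\{e^*:e\in\xi\}$, and for $\xi\subseteq\mathsf E$, $\xi^\dagger=\mathsf E^*\setminus\xi^*$. Fix integers $q,q'\ge1$ and finite $Q,Q'\subset\mathbb C$ with $Q=-Q$, $Q'=-Q'$, $|Q|=q$, $|Q'|=q'$. For $\sigma:\mathsf V\to Q$, $\eta(\sigma)\subseteq\mathsf E^*$ is the set of $e^*$ whose primal $e$ has endpoints with different $\sigma$-values; for $\sigma':\mathsf U\to Q'$, $\eta(\sigma')\subseteq\mathsf E$ is the set of $e$ whose dual $e^*$ has endpoints with different $\sigma'$-values. $\Sigma=\{(\sigma,\sigma'):\eta(\sigma)^*\cap\eta(\sigma')=\emptyset\}$. A cluster of $\omega$ is a connected component of $(\mathsf V,\omega)$ (isolated vertices included), $k(\omega)$ their number; clusters of $\omega^\dagger$ are connected components of $(\mathsf U,\omega^\dagger)$. *)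

theory Defs
  imports Complex_Main "HOL-Library.FuncSet"
begin

text \<open>A connected graph cellularly embedded in an orientable surface is encoded by a
combinatorial map: a finite set of darts D (half-edges), a fixed-point-free involution
alpha on D (the two darts of an edge) and a permutation rho of D (cyclic order of darts
around each vertex).  Vertices are rho-orbits, edges are alpha-orbits, faces are orbits
of rho o alpha.  The edge {d, alpha d} joins the vertices orb rho d and orb rho (alpha d);
its dual edge joins the faces of d and of alpha d.\<close>

definition orb :: "('d \<Rightarrow> 'd) \<Rightarrow> 'd \<Rightarrow> 'd set" where
  "orb f d = range (\<lambda>n. (f ^^ n) d)"

definition map_verts :: "'d set \<Rightarrow> ('d \<Rightarrow> 'd) \<Rightarrow> 'd set set" where
  "map_verts D rho = orb rho ` D"

definition face_of :: "('d \<Rightarrow> 'd) \<Rightarrow> ('d \<Rightarrow> 'd) \<Rightarrow> 'd \<Rightarrow> 'd set" where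
  "face_of alpha rho d = orb (rho \<circ> alpha) d"

definition map_faces :: "'d set \<Rightarrow> ('d \<Rightarrow> 'd) \<Rightarrow> ('d \<Rightarrow> 'd) \<Rightarrow> 'd set set" where
  "map_faces D alpha rho = face_of alpha rho ` D"

definition map_edges :: "'d set \<Rightarrow> ('d \<Rightarrow> 'd) \<Rightarrow> 'd set set" where
  "map_edges D alpha = (\<lambda>d. {d, alpha d}) ` D"

definition comb_map :: "'d set \<Rightarrow> ('d \<Rightarrow> 'd) \<Rightarrow> ('d \<Rightarrow> 'd) \<Rightarrow> bool" where
  "comb_map D alpha rho \<longleftrightarrow>
     finite D \<and> D \<noteq> {} \<and> bij_betw alpha D D \<and> bij_betw rho D D \<and>
     (\<forall>d\<in>D. alpha d \<noteq> d \<and> alpha (alpha d) = d) \<and>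
     (\<forall>d\<in>D. \<forall>d'\<in>D. (d, d') \<in> ({(x, alpha x) | x. x \<in> D} \<union> {(x, rho x) | x. x \<in> D})\<^sup>*)"

definition genus_zero :: "'d set \<Rightarrow> ('d \<Rightarrow> 'd) \<Rightarrow> ('d \<Rightarrow> 'd) \<Rightarrow> bool" where
  "genus_zero D alpha rho \<longleftrightarrow>
     int (card (map_verts D rho)) - int (card (map_edges D alpha))
       + int (card (map_faces D alpha rho)) = 2"

definition primal_rel :: "'d set \<Rightarrow> ('d \<Rightarrow> 'd) \<Rightarrow> ('d \<Rightarrow> 'd) \<Rightarrow> 'd set set \<Rightarrow> ('d set \<times> 'd set) set" where
  "primal_rel D alpha rho \<omega> =
     {(orb rho d, orb rho (alpha d)) | d. d \<in> D \<and> {d, alpha d} \<in> \<omega>}"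

text \<open>Adjacency of faces via the dual edges of omega-dagger = E* minus omega*.\<close>
definition dual_rel :: "'d set \<Rightarrow> ('d \<Rightarrow> 'd) \<Rightarrow> ('d \<Rightarrow> 'd) \<Rightarrow> 'd set set \<Rightarrow> ('d set \<times> 'd set) set" where
  "dual_rel D alpha rho \<omega> =
     {(face_of alpha rho d, face_of alpha rho (alpha d)) | d. d \<in> D \<and> {d, alpha d} \<notin> \<omega>}"

definition clusters :: "'d set \<Rightarrow> ('d \<Rightarrow> 'd) \<Rightarrow> ('d \<Rightarrow> 'd) \<Rightarrow> 'd set set \<Rightarrow> 'd set set set" where
  "clusters D alpha rho \<omega> = map_verts D rho // ((primal_rel D alpha rho \<omega>)\<^sup>*)"

definition dual_clusters :: "'d set \<Rightarrow> ('d \<Rightarrow> 'd) \<Rightarrow> ('d \<Rightarrow> 'd) \<Rightarrow> 'd set set \<Rightarrow> 'd set set set" where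
  "dual_clusters D alpha rho \<omega> = map_faces D alpha rho // ((dual_rel D alpha rho \<omega>)\<^sup>*)"

text \<open>eta(sigma), indexed by primal edges: the edges e whose endpoints carry different
sigma values (eta(sigma) itself is the set of the corresponding dual edges e*).\<close>
definition eta_primal :: "'d set \<Rightarrow> ('d \<Rightarrow> 'd) \<Rightarrow> ('d \<Rightarrow> 'd) \<Rightarrow> ('d set \<Rightarrow> complex) \<Rightarrow> 'd set set" where
  "eta_primal D alpha rho \<sigma> =
     {{d, alpha d} | d. d \<in> D \<and> \<sigma> (orb rho d) \<noteq> \<sigma> (orb rho (alpha d))}"

text \<open>eta(sigma'): the primal edges e whose dual edge e* has endpoints with different sigma'.\<close>
definition eta_dual :: "'d set \<Rightarrow> ('d \<Rightarrow> 'd) \<Rightarrow> ('d \<Rightarrow> 'd) \<Rightarrow> ('d set \<Rightarrow> complex) \<Rightarrow> 'd set set" where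
  "eta_dual D alpha rho \<sigma>' =
     {{d, alpha d} | d. d \<in> D \<and> \<sigma>' (face_of alpha rho d) \<noteq> \<sigma>' (face_of alpha rho (alpha d))}"

definition in_Sigma :: "'d set \<Rightarrow> ('d \<Rightarrow> 'd) \<Rightarrow> ('d \<Rightarrow> 'd) \<Rightarrow> ('d set \<Rightarrow> complex) \<Rightarrow> ('d set \<Rightarrow> complex) \<Rightarrow> bool" where
  "in_Sigma D alpha rho \<sigma> \<sigma>' \<longleftrightarrow> eta_primal D alpha rho \<sigma> \<inter> eta_dual D alpha rho \<sigma>' = {}"

definition fk_weight :: "'d set \<Rightarrow> ('d \<Rightarrow> 'd) \<Rightarrow> ('d \<Rightarrow> 'd) \<Rightarrow> real \<Rightarrow> real \<Rightarrow> 'd set set \<Rightarrow> real" where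
  "fk_weight D alpha rho Q p \<omega> =
     Q ^ card (clusters D alpha rho \<omega>) * p ^ card \<omega> * (1 - p) ^ card (map_edges D alpha - \<omega>)"

definition fk_prob :: "'d set \<Rightarrow> ('d \<Rightarrow> 'd) \<Rightarrow> ('d \<Rightarrow> 'd) \<Rightarrow> real \<Rightarrow> real \<Rightarrow> 'd set set \<Rightarrow> real" where
  "fk_prob D alpha rho Q p \<omega> =
     fk_weight D alpha rho Q p \<omega> / (\<Sum>\<omega>'\<in>Pow (map_edges D alpha). fk_weight D alpha rho Q p \<omega>')"

definition const_on_clusters :: "('d set \<Rightarrow> complex) \<Rightarrow> 'd set set set \<Rightarrow> bool" where
  "const_on_clusters \<sigma> C \<longleftrightarrow> (\<forall>c\<in>C. \<forall>x\<in>c. \<forall>y\<in>c. \<sigma> x = \<sigma> y)"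

text \<open>Probability that independent uniform spins from a set of size n on the clusters C
produce the configuration sigma (given sigma takes values in the spin set).\<close>
definition cluster_spin_prob :: "nat \<Rightarrow> 'd set set set \<Rightarrow> ('d set \<Rightarrow> complex) \<Rightarrow> real" where
  "cluster_spin_prob n C \<sigma> = (if const_on_clusters \<sigma> C then 1 / real n ^ card C else 0)"

definition coupled_law :: "'d set \<Rightarrow> ('d \<Rightarrow> 'd) \<Rightarrow> ('d \<Rightarrow> 'd) \<Rightarrow> nat \<Rightarrow> nat \<Rightarrow> real
     \<Rightarrow> ('d set \<Rightarrow> complex) \<Rightarrow> ('d set \<Rightarrow> complex) \<Rightarrow> real" where
  "coupled_law D alpha rho q q' p \<sigma> \<sigma>' =
     (\<Sum>\<omega>\<in>Pow (map_edges D alpha).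
        fk_prob D alpha rho (real q * real q') p \<omega>
        * cluster_spin_prob q (clusters D alpha rho \<omega>) \<sigma>
        * cluster_spin_prob q' (dual_clusters D alpha rho \<omega>) \<sigma>')"

end

theory Submission
  imports Defs
begin


lemma funpow_in: "f ` D \<subseteq> D \<Longrightarrow> x \<in> D \<Longrightarrow> (f ^^ n) x \<in> D"
  by (induction n) auto

lemma inj_on_funpow': "inj_on f D \<Longrightarrow> f ` D \<subseteq> D \<Longrightarrow> inj_on (f ^^ n) D"
proof (induction n)
  case 0 then show ?case by simp
next
  case (Suc n)
  have "(f ^^ Suc n) = f \<circ> (f ^^ n)" by simp
  moreover have "(f ^^ n) ` D \<subseteq> D" using funpow_in[OF Suc.prems(2)] by (simp add: image_subset_iff)
  moreover have "inj_on (f ^^ n) D" using Suc by blast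
  ultimately have "inj_on (f \<circ> (f ^^ n)) D" using comp_inj_on[of "f ^^ n" D f] inj_on_subset[of f D] Suc.prems by simp
  thus ?case by (simp only: funpow.simps(2))
qed

lemma funpow_period:
  assumes "finite D" "bij_betw f D D" "x \<in> D"
  shows "\<exists>n>0. (f ^^ n) x = x"
proof -
  have fD: "f ` D \<subseteq> D" and inj: "inj_on f D" using assms(2) unfolding bij_betw_def by auto
  have "(\<lambda>n. (f ^^ n) x) ` {0..card D} \<subseteq> D" using funpow_in[OF fD assms(3)] by auto
  hence "\<not> inj_on (\<lambda>n. (f ^^ n) x) {0..card D}"
  proof (intro notI)
    assume "inj_on (\<lambda>n. (f ^^ n) x) {0..card D}" "(\<lambda>n. (f ^^ n) x) ` {0..card D} \<subseteq> D"
    hence "card {0..card D} \<le> card D" using card_inj_on_le assms(1) by blast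
    thus False by simp
  qed
  then obtain i j where ij: "i \<in> {0..card D}" "j \<in> {0..card D}" "i \<noteq> j" "(f ^^ i) x = (f ^^ j) x"
    unfolding inj_on_def by blast
  then obtain i j where ij: "i < j" "(f ^^ i) x = (f ^^ j) x"
  proof (cases "i < j")
    case True then show ?thesis using that ij by blast
  next
    case False then have "j < i" using ij(3) by simp
    then show ?thesis using that ij(4)[symmetric] by blast
  qed
  have "(f ^^ j) x = (f ^^ i) ((f ^^ (j - i)) x)"
  proof -
    have "j = i + (j - i)" using ij(1) by simp
    hence "(f ^^ j) = (f ^^ i) \<circ> (f ^^ (j - i))" by (metis funpow_add)
    thus ?thesis by simp
  qed
  hence "(f ^^ i) x = (f ^^ i) ((f ^^ (j - i)) x)" using ij(2) by metis
  moreover have "(f ^^ (j - i)) x \<in> D" using funpow_in[OF fD assms(3)] .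
  ultimately have "x = (f ^^ (j - i)) x"
    using inj_onD[OF inj_on_funpow'[OF inj fD, of i]] assms(3) by metis
  thus ?thesis using ij(1) zero_less_diff by metis
qed

lemma orb_self: "x \<in> orb f x"
  unfolding orb_def by (metis funpow_0 rangeI)

lemma orb_step_sub: "orb f (f x) \<subseteq> orb f x"
  unfolding orb_def by (auto simp del: funpow.simps simp add: funpow_Suc_right[symmetric] o_def)
     (metis funpow_Suc_right o_apply rangeI)

lemma orb_funpow_sub: "orb f ((f ^^ n) x) \<subseteq> orb f x"
  unfolding orb_def by (auto simp: funpow_add[symmetric, unfolded o_def] ) (metis funpow_add o_apply rangeI)

lemma orb_member_eq:
  assumes "finite D" "bij_betw f D D" "x \<in> D" "y \<in> orb f x"
  shows "orb f y = orb f x"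
proof -
  obtain m where y: "y = (f ^^ m) x" using assms(4) unfolding orb_def by auto
  obtain n where n: "n > 0" "(f ^^ n) x = x" using funpow_period[OF assms(1-3)] by auto
  have per: "(f ^^ (k * n)) x = x" for k
    by (induction k) (auto simp: funpow_add n(2))
  have "(f ^^ (m * n - m)) y = x"
  proof -
    have "m * n - m + m = m * n" using n(1) by (cases n) auto
    hence "(f ^^ (m * n - m)) y = (f ^^ (m * n)) x" using y by (metis funpow_add o_apply)
    thus ?thesis using per[of m] by simp
  qed
  hence "orb f x \<subseteq> orb f y" using orb_funpow_sub by metis
  moreover have "orb f y \<subseteq> orb f x" using y orb_funpow_sub by metis
  ultimately show ?thesis by blast
qed



lemma quotient_image: "V // r = (\<lambda>z. r``{z}) ` V"
  by (auto simp: quotient_def)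

lemma quot_add:
  fixes R :: "'a rel"
  assumes fin: "finite V" and sub: "R \<subseteq> V \<times> V" and sy: "sym R" and xV: "x \<in> V" and yV: "y \<in> V"
  shows "card (V // (R \<union> {(x,y),(y,x)})\<^sup>*) + card {R\<^sup>*``{x}, R\<^sup>*``{y}} = card (V // R\<^sup>*) + 1"
    and "(x,y) \<in> R\<^sup>* \<Longrightarrow> (R \<union> {(x,y),(y,x)})\<^sup>* = R\<^sup>*"
proof -
  define R' where "R' = R \<union> {(x,y),(y,x)}"
  define Cx where "Cx = R\<^sup>*``{x}"
  define Cy where "Cy = R\<^sup>*``{y}"
  define M where "M = Cx \<union> Cy"
  define T where "T = R\<^sup>* \<union> M \<times> M"
  have syr: "sym (R\<^sup>*)" using sym_rtrancl[OF sy] .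
  have symD': "(a,b) \<in> R\<^sup>* \<Longrightarrow> (b,a) \<in> R\<^sup>*" for a b using syr by (meson symD)
  have Mclos: "b \<in> M \<Longrightarrow> (b,c) \<in> R\<^sup>* \<Longrightarrow> c \<in> M" for b c
  proof -
    assume b: "b \<in> M" and bc: "(b,c) \<in> R\<^sup>*"
    from b have "(x,b) \<in> R\<^sup>* \<or> (y,b) \<in> R\<^sup>*" by (simp add: M_def Cx_def Cy_def)
    then have "(x,c) \<in> R\<^sup>* \<or> (y,c) \<in> R\<^sup>*" using rtrancl_trans[OF _ bc] by blast
    then show "c \<in> M" by (simp add: M_def Cx_def Cy_def)
  qed
  have Mclos': "b \<in> M \<Longrightarrow> (c,b) \<in> R\<^sup>* \<Longrightarrow> c \<in> M" for b c
    using Mclos symD' by blast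
  have xM: "x \<in> M" and yM: "y \<in> M" unfolding M_def Cx_def Cy_def by auto
  have T1: "R'\<^sup>* \<subseteq> T"
  proof
    fix p assume "p \<in> R'\<^sup>*"
    then obtain a c where p: "p = (a,c)" and ac: "(a,c) \<in> R'\<^sup>*" by (cases p) auto
    from ac have "(a,c) \<in> T"
    proof (induction rule: rtrancl_induct)
      case base then show ?case unfolding T_def by simp
    next
      case (step b c)
      show ?case
      proof (cases "(b,c) \<in> R")
        case True
        show ?thesis
        proof (cases "(a,b) \<in> R\<^sup>*")
          case True then show ?thesis using rtrancl_into_rtrancl[OF True \<open>(b,c) \<in> R\<close>] unfolding T_def by simp
        next
          case False
          then have "a \<in> M" "b \<in> M" using step.IH unfolding T_def by auto
          then have "c \<in> M" using Mclos \<open>(b,c) \<in> R\<close> by blast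
          then show ?thesis using \<open>a \<in> M\<close> unfolding T_def by auto
        qed
      next
        case False
        then have bcM: "b \<in> M" "c \<in> M" using step.hyps(2) xM yM unfolding R'_def by auto
        have "a \<in> M"
        proof (cases "(a,b) \<in> R\<^sup>*")
          case True then show ?thesis using Mclos' bcM by blast
        next
          case False then show ?thesis using step.IH unfolding T_def by auto
        qed
        then show ?thesis using bcM unfolding T_def by auto
      qed
    qed
    then show "p \<in> T" using p by simp
  qed
  have RR': "R\<^sup>* \<subseteq> R'\<^sup>*" unfolding R'_def by (rule rtrancl_mono) auto
  have xy': "(x,y) \<in> R'\<^sup>*" "(y,x) \<in> R'\<^sup>*" unfolding R'_def by auto
  have toxy: "a \<in> M \<Longrightarrow> (a,x) \<in> R'\<^sup>* \<and> (x,a) \<in> R'\<^sup>*" for a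
  proof -
    assume "a \<in> M"
    then have "(x,a) \<in> R\<^sup>* \<or> (y,a) \<in> R\<^sup>*" unfolding M_def Cx_def Cy_def by auto
    then show ?thesis
    proof
      assume "(x,a) \<in> R\<^sup>*"
      then show ?thesis using RR' symD' by blast
    next
      assume h: "(y,a) \<in> R\<^sup>*"
      then have "(y,a) \<in> R'\<^sup>*" "(a,y) \<in> R'\<^sup>*" using RR' symD' by blast+
      then show ?thesis using rtrancl_trans[OF xy'(1)] rtrancl_trans[OF _ xy'(2)] by simp
    qed
  qed
  have T2: "T \<subseteq> R'\<^sup>*"
  proof
    fix p assume "p \<in> T"
    then have "p \<in> R\<^sup>* \<or> p \<in> M \<times> M" unfolding T_def by simp
    then show "p \<in> R'\<^sup>*"
    proof
      assume "p \<in> R\<^sup>*" then show ?thesis using RR' by blast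
    next
      assume "p \<in> M \<times> M"
      then obtain a b where p: "p = (a,b)" "a \<in> M" "b \<in> M" by auto
      then show ?thesis using toxy[of a] toxy[of b] rtrancl_trans[of a x R' b] by simp
    qed
  qed
  have RT: "R'\<^sup>* = T" using T1 T2 by blast
  have Timg: "T``{z} = (if z \<in> M then M else R\<^sup>*``{z})" for z
  proof (cases "z \<in> M")
    case True
    then have "R\<^sup>*``{z} \<subseteq> M" using Mclos by blast
    then show ?thesis using True unfolding T_def by auto
  next
    case False then show ?thesis unfolding T_def by auto
  qed
  have clsM: "z \<in> M \<Longrightarrow> R\<^sup>*``{z} = Cx \<or> R\<^sup>*``{z} = Cy" for z
  proof -
    assume "z \<in> M"
    then have "(x,z) \<in> R\<^sup>* \<or> (y,z) \<in> R\<^sup>*" unfolding M_def Cx_def Cy_def by auto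
    then show ?thesis
    proof
      assume h: "(x,z) \<in> R\<^sup>*"
      have "R\<^sup>*``{z} = Cx" unfolding Cx_def using rtrancl_trans[OF h] rtrancl_trans[OF symD'[OF h]] by auto
      then show ?thesis by simp
    next
      assume h: "(y,z) \<in> R\<^sup>*"
      have "R\<^sup>*``{z} = Cy" unfolding Cy_def using rtrancl_trans[OF h] rtrancl_trans[OF symD'[OF h]] by auto
      then show ?thesis by simp
    qed
  qed
  have notM: "z \<notin> M \<Longrightarrow> R\<^sup>*``{z} \<noteq> Cx \<and> R\<^sup>*``{z} \<noteq> Cy" for z
  proof -
    assume "z \<notin> M"
    moreover have "z \<in> R\<^sup>*``{z}" by simp
    ultimately show ?thesis unfolding M_def by auto
  qed
  define W where "W = (\<lambda>z. R\<^sup>*``{z}) ` (V - M)"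
  have VT: "V // T = insert M W"
  proof -
    have "V // T = (\<lambda>z. T``{z}) ` V" by (rule quotient_image)
    also have "\<dots> = (\<lambda>z. T``{z}) ` (V \<inter> M) \<union> (\<lambda>z. T``{z}) ` (V - M)" by (simp only: image_Un[symmetric] Int_Diff_Un)
    also have "(\<lambda>z. T``{z}) ` (V \<inter> M) = {M}"
    proof -
      have "\<forall>z\<in>V \<inter> M. T``{z} = M" using Timg by simp
      moreover have "V \<inter> M \<noteq> {}" using xV xM by blast
      ultimately show ?thesis by auto
    qed
    also have "(\<lambda>z. T``{z}) ` (V - M) = W" unfolding W_def using Timg by auto
    finally show ?thesis by simp
  qed
  have VR: "V // R\<^sup>* - {Cx, Cy} = W"
  proof -
    have "V // R\<^sup>* = (\<lambda>z. R\<^sup>*``{z}) ` V" by (rule quotient_image)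
    also have "\<dots> = (\<lambda>z. R\<^sup>*``{z}) ` (V \<inter> M) \<union> W" unfolding W_def by (simp only: image_Un[symmetric] Int_Diff_Un)
    finally have eq: "V // R\<^sup>* = (\<lambda>z. R\<^sup>*``{z}) ` (V \<inter> M) \<union> W" .
    have "(\<lambda>z. R\<^sup>*``{z}) ` (V \<inter> M) \<subseteq> {Cx, Cy}" using clsM by auto
    moreover have "W \<inter> {Cx, Cy} = {}" unfolding W_def using notM by auto
    ultimately show ?thesis unfolding eq by auto
  qed
  have MW: "M \<notin> W"
  proof
    assume "M \<in> W"
    then obtain z where z: "z \<in> V - M" "M = R\<^sup>*``{z}" unfolding W_def by auto
    then have "(z,x) \<in> R\<^sup>*" using xM by auto
    then have "z \<in> M" using Mclos' xM by blast
    then show False using z by simp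
  qed
  have finQ: "finite (V // R\<^sup>*)" unfolding quotient_image using fin by simp
  have sub2: "{Cx, Cy} \<subseteq> V // R\<^sup>*" using xV yV unfolding Cx_def Cy_def quotient_image by auto
  have finW: "finite W" unfolding W_def using fin by simp
  have "card (V // R'\<^sup>*) = card W + 1" unfolding RT VT using MW finW by simp
  moreover have "card W = card (V // R\<^sup>*) - card {Cx, Cy}"
    unfolding VR[symmetric] using card_Diff_subset[OF _ sub2] by simp
  moreover have "card {Cx, Cy} \<le> card (V // R\<^sup>*)" using card_mono[OF finQ sub2] .
  ultimately show "card (V // (R \<union> {(x,y),(y,x)})\<^sup>*) + card {R\<^sup>*``{x}, R\<^sup>*``{y}} = card (V // R\<^sup>*) + 1"
    unfolding R'_def Cx_def Cy_def by simp
  show "(x,y) \<in> R\<^sup>* \<Longrightarrow> (R \<union> {(x,y),(y,x)})\<^sup>* = R\<^sup>*"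
  proof -
    assume h: "(x,y) \<in> R\<^sup>*"
    have "M \<times> M \<subseteq> R\<^sup>*"
    proof
      fix p assume "p \<in> M \<times> M"
      then obtain a b where p: "p = (a,b)" "a \<in> M" "b \<in> M" by auto
      have "(x,a) \<in> R\<^sup>*" "(x,b) \<in> R\<^sup>*" using p rtrancl_trans[OF h] unfolding M_def Cx_def Cy_def
        by auto
      then show "p \<in> R\<^sup>*" using p(1) rtrancl_trans[OF symD'] by blast
    qed
    then show ?thesis using RT unfolding T_def R'_def by blast
  qed
qed



lemma cm_parts: "comb_map D alpha rho \<Longrightarrow> finite D \<and> bij_betw alpha D D \<and> bij_betw rho D D \<and> (\<forall>d\<in>D. alpha d \<noteq> d \<and> alpha (alpha d) = d)"
  unfolding comb_map_def by (elim conjE) (intro conjI)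
lemma cm_fin: "comb_map D alpha rho \<Longrightarrow> finite D" by (drule cm_parts) simp
lemma cm_rho_bij: "comb_map D alpha rho \<Longrightarrow> bij_betw rho D D"
  by (drule cm_parts) simp
lemma cm_alpha_bij: "comb_map D alpha rho \<Longrightarrow> bij_betw alpha D D"
  by (drule cm_parts) simp
lemma cm_alpha_in: "comb_map D alpha rho \<Longrightarrow> x \<in> D \<Longrightarrow> alpha x \<in> D"
  using cm_alpha_bij bij_betw_apply by metis
lemma cm_rho_in: "comb_map D alpha rho \<Longrightarrow> x \<in> D \<Longrightarrow> rho x \<in> D"
  using cm_rho_bij bij_betw_apply by metis
lemma cm_alpha_inv: "comb_map D alpha rho \<Longrightarrow> x \<in> D \<Longrightarrow> alpha (alpha x) = x"
  by (drule cm_parts) simp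
lemma cm_alpha_ne: "comb_map D alpha rho \<Longrightarrow> x \<in> D \<Longrightarrow> alpha x \<noteq> x"
  by (drule cm_parts) simp
lemma cm_phi_bij: "comb_map D alpha rho \<Longrightarrow> bij_betw (rho \<circ> alpha) D D"
  using cm_rho_bij cm_alpha_bij bij_betw_trans by metis
lemma cm_rho_inj: "comb_map D alpha rho \<Longrightarrow> inj_on rho D"
  using cm_rho_bij bij_betw_def by metis
lemma cm_alpha_inj: "comb_map D alpha rho \<Longrightarrow> inj_on alpha D"
  using cm_alpha_bij bij_betw_def by metis
lemma cm_rho_surj: "comb_map D alpha rho \<Longrightarrow> y \<in> D \<Longrightarrow> \<exists>x\<in>D. rho x = y"
  using cm_rho_bij unfolding bij_betw_def by (metis imageE)

lemma orb_step_mem: "f x \<in> orb f x"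
  unfolding orb_def by (rule range_eqI[of _ _ 1]) simp

lemma cm_orb_rho: assumes "comb_map D alpha rho" "x \<in> D" shows "orb rho (rho x) = orb rho x"
  by (rule orb_member_eq[OF cm_fin[OF assms(1)] cm_rho_bij[OF assms(1)] assms(2) orb_step_mem])

lemma cm_face_rho: assumes "comb_map D alpha rho" "x \<in> D"
  shows "face_of alpha rho (rho x) = face_of alpha rho (alpha x)"
proof -
  have "rho x = (rho \<circ> alpha) (alpha x)" using cm_alpha_inv[OF assms] by simp
  hence "rho x \<in> orb (rho \<circ> alpha) (alpha x)" using orb_step_mem[of "rho \<circ> alpha" "alpha x"] by simp
  thus ?thesis unfolding face_of_def
    by (rule orb_member_eq[OF cm_fin[OF assms(1)] cm_phi_bij[OF assms(1)] cm_alpha_in[OF assms]])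
qed

lemma cm_face_aa: "comb_map D alpha rho \<Longrightarrow> x \<in> D \<Longrightarrow> face_of alpha rho (alpha (alpha x)) = face_of alpha rho x"
  by (simp add: cm_alpha_inv)

lemma edge_eq: assumes "comb_map D alpha rho" "x \<in> D" "d \<in> D"
  shows "{x, alpha x} = {d, alpha d} \<longleftrightarrow> x = d \<or> x = alpha d"
  using cm_alpha_inv[OF assms(1,3)] by (auto simp: doubleton_eq_iff)

lemma primal_sub: "comb_map D alpha rho \<Longrightarrow> primal_rel D alpha rho \<omega> \<subseteq> map_verts D rho \<times> map_verts D rho"
  unfolding primal_rel_def map_verts_def using cm_alpha_in[of D alpha rho] by auto

lemma dual_sub: "comb_map D alpha rho \<Longrightarrow> dual_rel D alpha rho \<omega> \<subseteq> map_faces D alpha rho \<times> map_faces D alpha rho"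
  unfolding dual_rel_def map_faces_def using cm_alpha_in[of D alpha rho] by auto

lemma primal_sym: assumes "comb_map D alpha rho" shows "sym (primal_rel D alpha rho \<omega>)"
proof (rule symI)
  fix a b assume "(a,b) \<in> primal_rel D alpha rho \<omega>"
  then obtain d where d: "d \<in> D" "{d, alpha d} \<in> \<omega>" "a = orb rho d" "b = orb rho (alpha d)"
    unfolding primal_rel_def by blast
  have "alpha d \<in> D" "{alpha d, alpha (alpha d)} \<in> \<omega>" "b = orb rho (alpha d)" "a = orb rho (alpha (alpha d))"
    using d cm_alpha_in[OF assms] cm_alpha_inv[OF assms] by (auto simp: insert_commute)
  then show "(b,a) \<in> primal_rel D alpha rho \<omega>" unfolding primal_rel_def by blast
qed

lemma dual_sym: assumes "comb_map D alpha rho" shows "sym (dual_rel D alpha rho \<omega>)"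
proof (rule symI)
  fix a b assume "(a,b) \<in> dual_rel D alpha rho \<omega>"
  then obtain d where d: "d \<in> D" "{d, alpha d} \<notin> \<omega>" "a = face_of alpha rho d" "b = face_of alpha rho (alpha d)"
    unfolding dual_rel_def by blast
  have "alpha d \<in> D" "{alpha d, alpha (alpha d)} \<notin> \<omega>" "b = face_of alpha rho (alpha d)" "a = face_of alpha rho (alpha (alpha d))"
    using d cm_alpha_in[OF assms] cm_alpha_inv[OF assms] by (auto simp: insert_commute)
  then show "(b,a) \<in> dual_rel D alpha rho \<omega>" unfolding dual_rel_def by blast
qed

lemma primal_insert: assumes cm: "comb_map D alpha rho" and d: "d \<in> D"
  shows "primal_rel D alpha rho (insert {d, alpha d} \<omega>) = primal_rel D alpha rho \<omega> \<union>
     {(orb rho d, orb rho (alpha d)), (orb rho (alpha d), orb rho d)}"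
proof -
  have "primal_rel D alpha rho (insert {d, alpha d} \<omega>) =
     {(orb rho x, orb rho (alpha x)) | x. x \<in> D \<and> {x, alpha x} = {d, alpha d}} \<union> primal_rel D alpha rho \<omega>"
    unfolding primal_rel_def by blast
  also have "{(orb rho x, orb rho (alpha x)) | x. x \<in> D \<and> {x, alpha x} = {d, alpha d}} =
      {(orb rho d, orb rho (alpha d)), (orb rho (alpha d), orb rho d)}"
    using edge_eq[OF cm _ d] d cm_alpha_in[OF cm d] cm_alpha_inv[OF cm d] by auto
  finally show ?thesis by blast
qed

lemma dual_insert: assumes cm: "comb_map D alpha rho" and d: "d \<in> D" and n: "{d, alpha d} \<notin> \<omega>"
  shows "dual_rel D alpha rho \<omega> = dual_rel D alpha rho (insert {d, alpha d} \<omega>) \<union>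
     {(face_of alpha rho d, face_of alpha rho (alpha d)), (face_of alpha rho (alpha d), face_of alpha rho d)}"
proof -
  have "dual_rel D alpha rho \<omega> =
     {(face_of alpha rho x, face_of alpha rho (alpha x)) | x. x \<in> D \<and> {x, alpha x} = {d, alpha d}} \<union> dual_rel D alpha rho (insert {d, alpha d} \<omega>)"
    unfolding dual_rel_def using n by auto
  also have "{(face_of alpha rho x, face_of alpha rho (alpha x)) | x. x \<in> D \<and> {x, alpha x} = {d, alpha d}} =
      {(face_of alpha rho d, face_of alpha rho (alpha d)), (face_of alpha rho (alpha d), face_of alpha rho d)}"
    using edge_eq[OF cm _ d] d cm_alpha_in[OF cm d] cm_alpha_inv[OF cm d] by auto
  finally show ?thesis by blast
qed



lemma topo:
  assumes cm: "comb_map D alpha rho" and dD: "d \<in> D"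
  shows "(face_of alpha rho d, face_of alpha rho (alpha d)) \<in> (dual_rel D alpha rho (insert {d, alpha d} \<omega>))\<^sup>*
       \<or> (orb rho d, orb rho (alpha d)) \<in> (primal_rel D alpha rho \<omega>)\<^sup>*"
proof (rule ccontr)
  let ?f = "face_of alpha rho"
  let ?e = "{d, alpha d}"
  define Rd where "Rd = dual_rel D alpha rho (insert ?e \<omega>)"
  define Rp where "Rp = primal_rel D alpha rho \<omega>"
  assume "\<not> ((?f d, ?f (alpha d)) \<in> (dual_rel D alpha rho (insert {d, alpha d} \<omega>))\<^sup>*
       \<or> (orb rho d, orb rho (alpha d)) \<in> (primal_rel D alpha rho \<omega>)\<^sup>*)"
  then have nd: "(?f d, ?f (alpha d)) \<notin> Rd\<^sup>*" and np: "(orb rho d, orb rho (alpha d)) \<notin> Rp\<^sup>*"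
    unfolding Rd_def Rp_def by auto
  define S where "S = Rd\<^sup>* `` {?f d}"
  define C where "C = Rp\<^sup>* `` {orb rho d}"
  define X where "X = {x \<in> D. orb rho x \<in> C}"
  have finD: "finite D" using cm_fin[OF cm] .
  have finX: "finite X" unfolding X_def using finD by simp
  have aD: "x \<in> D \<Longrightarrow> alpha x \<in> D" for x using cm_alpha_in[OF cm] .
  have aa: "x \<in> D \<Longrightarrow> alpha (alpha x) = x" for x using cm_alpha_inv[OF cm] .
  have Sclos: "?f x \<in> S \<longleftrightarrow> ?f (alpha x) \<in> S" if x: "x \<in> D" "{x, alpha x} \<notin> insert ?e \<omega>" for x
  proof -
    have r1: "(?f x, ?f (alpha x)) \<in> Rd" unfolding Rd_def dual_rel_def using x by blast
    have "{alpha x, alpha (alpha x)} \<notin> insert ?e \<omega>" using x aa[OF x(1)] by (simp add: insert_commute)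
    then have r2: "(?f (alpha x), ?f x) \<in> Rd" unfolding Rd_def dual_rel_def using x aD[OF x(1)] aa[OF x(1)]
      by (smt (verit) mem_Collect_eq)
    show ?thesis
    proof
      assume "?f x \<in> S" then show "?f (alpha x) \<in> S" unfolding S_def using r1 rtrancl_into_rtrancl[of _ _ Rd] by blast
    next
      assume "?f (alpha x) \<in> S" then show "?f x \<in> S" unfolding S_def using r2 rtrancl_into_rtrancl[of _ _ Rd] by blast
    qed
  qed
  have Cclos: "alpha x \<in> X" if x: "x \<in> X" "{x, alpha x} \<in> \<omega>" for x
  proof -
    have xD: "x \<in> D" using x unfolding X_def by simp
    have "(orb rho x, orb rho (alpha x)) \<in> Rp" unfolding Rp_def primal_rel_def using x xD by blast
    moreover have "orb rho x \<in> C" using x unfolding X_def by simp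
    ultimately have "orb rho (alpha x) \<in> C" unfolding C_def using rtrancl_into_rtrancl[of _ _ Rp] by blast
    then show ?thesis unfolding X_def using aD[OF xD] by simp
  qed
  have XD: "X \<subseteq> D" unfolding X_def by auto
  have rhoX: "rho ` X = X"
  proof
    show "rho ` X \<subseteq> X" unfolding X_def using cm_orb_rho[OF cm] cm_rho_in[OF cm] by auto
    show "X \<subseteq> rho ` X"
    proof
      fix y assume y: "y \<in> X"
      then obtain x where x: "x \<in> D" "rho x = y" using cm_rho_surj[OF cm] XD by blast
      then have "orb rho x = orb rho y" using cm_orb_rho[OF cm x(1)] by simp
      then have "x \<in> X" using x y unfolding X_def by simp
      then show "y \<in> rho ` X" using x by blast
    qed
  qed
  define A where "A = {x \<in> X. ?f x \<in> S}"
  define A' where "A' = {x \<in> X. ?f (alpha x) \<in> S}"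
  have "rho ` A' = A"
  proof
    show "rho ` A' \<subseteq> A"
    proof
      fix y assume "y \<in> rho ` A'"
      then obtain x where x: "x \<in> A'" "y = rho x" by blast
      then have "x \<in> D" "x \<in> X" using XD unfolding A'_def by auto
      then show "y \<in> A" using x rhoX cm_face_rho[OF cm] unfolding A_def A'_def by auto
    qed
    show "A \<subseteq> rho ` A'"
    proof
      fix y assume y: "y \<in> A"
      then obtain x where x: "x \<in> X" "rho x = y" using rhoX unfolding A_def by (metis (no_types, lifting) imageE mem_Collect_eq)
      then have "x \<in> D" using XD by auto
      then have "x \<in> A'" using x y cm_face_rho[OF cm] unfolding A_def A'_def by auto
      then show "y \<in> rho ` A'" using x by blast
    qed
  qed
  moreover have "inj_on rho A'"
    by (rule inj_on_subset[OF cm_rho_inj[OF cm]]) (use XD in \<open>auto simp: A'_def\<close>)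
  ultimately have cAA: "card A' = card A" using card_image by metis
  have finA: "finite A" "finite A'" using finX unfolding A_def A'_def by auto
  have cB: "card (A' - A) = card (A - A')"
    using card_Diff_subset_Int[of A' A] card_Diff_subset_Int[of A A'] finA cAA
    by (simp add: Int_commute)
  have dX: "d \<in> X" unfolding X_def C_def using dD by simp
  have daX: "alpha d \<notin> X" using np unfolding X_def C_def by simp
  have dB: "d \<in> A - A'" using dX nd unfolding A_def A'_def S_def by simp
  have map: "alpha ` (A' - A) \<subseteq> (A - A') - {d}"
  proof
    fix y assume "y \<in> alpha ` (A' - A)"
    then obtain x where x: "x \<in> A' - A" "y = alpha x" by blast
    then have xX: "x \<in> X" and xD: "x \<in> D" and fa: "?f (alpha x) \<in> S" and fx: "?f x \<notin> S"
      using XD unfolding A_def A'_def by auto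
    have ein: "{x, alpha x} \<in> insert ?e \<omega>" using Sclos[OF xD] fa fx by blast
    have "x \<noteq> alpha d" using xX daX by blast
    moreover have "x \<noteq> d" using fx dB unfolding A_def by blast
    ultimately have "{x, alpha x} \<noteq> ?e" using edge_eq[OF cm xD dD] by simp
    then have "{x, alpha x} \<in> \<omega>" using ein by simp
    then have "alpha x \<in> X" using Cclos xX by blast
    moreover have "?f (alpha (alpha x)) \<notin> S" using fx aa[OF xD] by simp
    moreover have "alpha x \<noteq> d" using \<open>x \<noteq> alpha d\<close> aa[OF xD] by metis
    ultimately show "y \<in> (A - A') - {d}" using x fa unfolding A_def A'_def by simp
  qed
  have "inj_on alpha (A' - A)"
    by (rule inj_on_subset[OF cm_alpha_inj[OF cm]]) (use XD in \<open>auto simp: A'_def\<close>)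
  then have "card (A' - A) \<le> card ((A - A') - {d})"
    using card_inj_on_le[OF _ map] finA by simp
  also have "\<dots> < card (A - A')" using dB finA card_Diff1_less[of "A - A'" d] by blast
  finally show False using cB by simp
qed



lemma cm_conn: "comb_map D alpha rho \<Longrightarrow> x \<in> D \<Longrightarrow> y \<in> D \<Longrightarrow>
   (x, y) \<in> ({(x, alpha x) | x. x \<in> D} \<union> {(x, rho x) | x. x \<in> D})\<^sup>*"
  unfolding comb_map_def by (elim conjE) (drule bspec, assumption, drule bspec, assumption)

lemma rtrancl_stays: "(z,w) \<in> R\<^sup>* \<Longrightarrow> R \<subseteq> V \<times> V \<Longrightarrow> z \<in> V \<Longrightarrow> w \<in> V"
  by (induction rule: rtrancl_induct) auto

lemma quotient_connected:
  assumes "R \<subseteq> V \<times> V" "V \<noteq> {}" "\<And>a b. a \<in> V \<Longrightarrow> b \<in> V \<Longrightarrow> (a,b) \<in> R\<^sup>*"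
  shows "card (V // R\<^sup>*) = 1"
proof -
  have "\<And>z. z \<in> V \<Longrightarrow> R\<^sup>*``{z} = V"
    using assms(1,3) rtrancl_stays[of _ _ R V] by blast
  then have "V // R\<^sup>* = {V}" unfolding quotient_image using assms(2) by auto
  then show ?thesis by simp
qed

lemma quotient_empty: "card (V // ({}::'a rel)\<^sup>*) = card V"
proof -
  have "V // ({}::'a rel)\<^sup>* = (\<lambda>z. {z}) ` V" unfolding quotient_image by simp
  then show ?thesis by (simp add: card_image)
qed

lemma primal_conn:
  assumes cm: "comb_map D alpha rho" and x: "x \<in> D" and y: "y \<in> D"
  shows "(orb rho x, orb rho y) \<in> (primal_rel D alpha rho (map_edges D alpha))\<^sup>*"
  using cm_conn[OF cm x y]
proof (induction rule: rtrancl_induct)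
  case base then show ?case by simp
next
  case (step y z)
  then show ?case
  proof (cases "(y, z) \<in> {(x, alpha x) | x. x \<in> D}")
    case True
    then obtain w where w: "w \<in> D" "y = w" "z = alpha w" by blast
    have "(orb rho y, orb rho z) \<in> primal_rel D alpha rho (map_edges D alpha)"
      unfolding primal_rel_def map_edges_def using w by blast
    then show ?thesis using step.IH by (rule rtrancl_into_rtrancl[rotated])
  next
    case False
    then obtain w where w: "w \<in> D" "y = w" "z = rho w" using step.hyps(2) by blast
    then show ?thesis using step.IH cm_orb_rho[OF cm w(1)] by simp
  qed
qed

lemma dual_conn:
  assumes cm: "comb_map D alpha rho" and x: "x \<in> D" and y: "y \<in> D"
  shows "(face_of alpha rho x, face_of alpha rho y) \<in> (dual_rel D alpha rho {})\<^sup>*"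
  using cm_conn[OF cm x y]
proof (induction rule: rtrancl_induct)
  case base then show ?case by simp
next
  case (step y z)
  then show ?case
  proof (cases "(y, z) \<in> {(x, alpha x) | x. x \<in> D}")
    case True
    then obtain w where w: "w \<in> D" "y = w" "z = alpha w" by blast
    have "(face_of alpha rho y, face_of alpha rho z) \<in> dual_rel D alpha rho {}"
      unfolding dual_rel_def using w by blast
    then show ?thesis using step.IH by (rule rtrancl_into_rtrancl[rotated])
  next
    case False
    then obtain w where w: "w \<in> D" "y = w" "z = rho w" using step.hyps(2) by blast
    have "(face_of alpha rho y, face_of alpha rho (alpha w)) \<in> dual_rel D alpha rho {}"
      unfolding dual_rel_def using w by blast
    then show ?thesis using step.IH cm_face_rho[OF cm w(1)] w by (simp add: rtrancl_into_rtrancl)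
  qed
qed

definition kk where "kk D alpha rho \<omega> = card (clusters D alpha rho \<omega>)"
definition ks where "ks D alpha rho \<omega> = card (dual_clusters D alpha rho \<omega>)"
definition FF where "FF D alpha rho \<omega> = int (ks D alpha rho \<omega>) - int (kk D alpha rho \<omega>) - int (card \<omega>)"

lemma fin_verts: "comb_map D alpha rho \<Longrightarrow> finite (map_verts D rho)"
  unfolding map_verts_def using cm_fin by blast
lemma fin_faces: "comb_map D alpha rho \<Longrightarrow> finite (map_faces D alpha rho)"
  unfolding map_faces_def using cm_fin by blast
lemma fin_edges: "comb_map D alpha rho \<Longrightarrow> finite (map_edges D alpha)"
  unfolding map_edges_def using cm_fin by blast

lemma card2: "card {a, b} \<ge> 1" "card {a, b} \<le> 2" "a = b \<Longrightarrow> card {a, b} = 1"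
  by (auto simp: card_insert_if)

lemma euler_step:
  assumes cm: "comb_map D alpha rho" and dD: "d \<in> D" and n: "{d, alpha d} \<notin> \<omega>"
  shows "int (ks D alpha rho (insert {d, alpha d} \<omega>)) - int (kk D alpha rho (insert {d, alpha d} \<omega>))
         \<le> int (ks D alpha rho \<omega>) - int (kk D alpha rho \<omega>) + 1"
proof -
  let ?V = "map_verts D rho" and ?U = "map_faces D alpha rho"
  let ?u = "orb rho d" and ?v = "orb rho (alpha d)"
  let ?fu = "face_of alpha rho d" and ?fv = "face_of alpha rho (alpha d)"
  define Rp where "Rp = primal_rel D alpha rho \<omega>"
  define Rd where "Rd = dual_rel D alpha rho (insert {d, alpha d} \<omega>)"
  have uV: "?u \<in> ?V" "?v \<in> ?V" unfolding map_verts_def using dD cm_alpha_in[OF cm dD] by auto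
  have fU: "?fu \<in> ?U" "?fv \<in> ?U" unfolding map_faces_def using dD cm_alpha_in[OF cm dD] by auto
  have pi: "primal_rel D alpha rho (insert {d, alpha d} \<omega>) = Rp \<union> {(?u,?v),(?v,?u)}"
    unfolding Rp_def by (rule primal_insert[OF cm dD])
  have di: "dual_rel D alpha rho \<omega> = Rd \<union> {(?fu,?fv),(?fv,?fu)}"
    unfolding Rd_def by (rule dual_insert[OF cm dD n])
  have P1: "kk D alpha rho (insert {d, alpha d} \<omega>) + card {Rp\<^sup>*``{?u}, Rp\<^sup>*``{?v}} = kk D alpha rho \<omega> + 1"
    unfolding kk_def clusters_def pi Rp_def
    by (rule quot_add(1)[OF fin_verts[OF cm] primal_sub[OF cm] primal_sym[OF cm] uV])
  have P2: "(?u,?v) \<in> Rp\<^sup>* \<Longrightarrow> kk D alpha rho (insert {d, alpha d} \<omega>) = kk D alpha rho \<omega>"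
    unfolding kk_def clusters_def pi Rp_def
    using quot_add(2)[OF fin_verts[OF cm] primal_sub[OF cm] primal_sym[OF cm] uV] by simp
  have D1: "ks D alpha rho \<omega> + card {Rd\<^sup>*``{?fu}, Rd\<^sup>*``{?fv}} = ks D alpha rho (insert {d, alpha d} \<omega>) + 1"
    unfolding ks_def dual_clusters_def di Rd_def
    by (rule quot_add(1)[OF fin_faces[OF cm] dual_sub[OF cm] dual_sym[OF cm] fU])
  have D2: "(?fu,?fv) \<in> Rd\<^sup>* \<Longrightarrow> ks D alpha rho \<omega> = ks D alpha rho (insert {d, alpha d} \<omega>)"
    unfolding ks_def dual_clusters_def di Rd_def
    using quot_add(2)[OF fin_faces[OF cm] dual_sub[OF cm] dual_sym[OF cm] fU] by simp
  from topo[OF cm dD, of \<omega>] have "(?fu,?fv) \<in> Rd\<^sup>* \<or> (?u,?v) \<in> Rp\<^sup>*" unfolding Rd_def Rp_def .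
  then show ?thesis
  proof
    assume "(?fu,?fv) \<in> Rd\<^sup>*"
    then have "ks D alpha rho \<omega> = ks D alpha rho (insert {d, alpha d} \<omega>)" by (rule D2)
    then show ?thesis using P1 card2(2)[of "Rp\<^sup>*``{?u}" "Rp\<^sup>*``{?v}"] by linarith
  next
    assume "(?u,?v) \<in> Rp\<^sup>*"
    then have "kk D alpha rho (insert {d, alpha d} \<omega>) = kk D alpha rho \<omega>" by (rule P2)
    moreover have "ks D alpha rho (insert {d, alpha d} \<omega>) \<le> ks D alpha rho \<omega> + 1"
      using D1 card2(2)[of "Rd\<^sup>*``{?fu}" "Rd\<^sup>*``{?fv}"] by linarith
    ultimately show ?thesis by simp
  qed
qed

lemma FF_mono1:
  assumes cm: "comb_map D alpha rho" and e: "e \<in> map_edges D alpha" and w: "\<omega> \<subseteq> map_edges D alpha"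
  shows "FF D alpha rho (insert e \<omega>) \<le> FF D alpha rho \<omega>"
proof (cases "e \<in> \<omega>")
  case True then show ?thesis by (simp add: insert_absorb)
next
  case False
  obtain d where d: "d \<in> D" "e = {d, alpha d}" using e unfolding map_edges_def by blast
  have "finite \<omega>" using w fin_edges[OF cm] finite_subset by blast
  then have "card (insert e \<omega>) = card \<omega> + 1" using False by simp
  then show ?thesis unfolding FF_def using euler_step[OF cm d(1), of \<omega>] False d(2) by simp
qed

lemma FF_mono:
  assumes cm: "comb_map D alpha rho"
  shows "finite T \<Longrightarrow> T \<subseteq> map_edges D alpha \<Longrightarrow> \<omega> \<subseteq> map_edges D alpha \<Longrightarrow> FF D alpha rho (\<omega> \<union> T) \<le> FF D alpha rho \<omega>"
proof (induction T rule: finite_induct)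
  case empty then show ?case by simp
next
  case (insert e T)
  have "FF D alpha rho (\<omega> \<union> insert e T) = FF D alpha rho (insert e (\<omega> \<union> T))" by simp
  also have "\<dots> \<le> FF D alpha rho (\<omega> \<union> T)"
    using FF_mono1[OF cm, of e "\<omega> \<union> T"] insert.prems by simp
  also have "\<dots> \<le> FF D alpha rho \<omega>" using insert by simp
  finally show ?case .
qed

lemma FF_empty: assumes cm: "comb_map D alpha rho"
  shows "FF D alpha rho {} = 1 - int (card (map_verts D rho))"
proof -
  have "primal_rel D alpha rho {} = {}" unfolding primal_rel_def by simp
  then have k: "kk D alpha rho {} = card (map_verts D rho)"
    unfolding kk_def clusters_def using quotient_empty by metis
  have DU: "D \<noteq> {}" using cm unfolding comb_map_def by blast
  have "ks D alpha rho {} = 1" unfolding ks_def dual_clusters_def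
  proof (rule quotient_connected[OF dual_sub[OF cm]])
    show "map_faces D alpha rho \<noteq> {}" unfolding map_faces_def using DU by simp
    fix a b assume "a \<in> map_faces D alpha rho" "b \<in> map_faces D alpha rho"
    then obtain x y where "x \<in> D" "y \<in> D" "a = face_of alpha rho x" "b = face_of alpha rho y"
      unfolding map_faces_def by blast
    then show "(a, b) \<in> (dual_rel D alpha rho {})\<^sup>*" using dual_conn[OF cm] by simp
  qed
  then show ?thesis unfolding FF_def using k by simp
qed

lemma FF_full: assumes cm: "comb_map D alpha rho" and g: "genus_zero D alpha rho"
  shows "FF D alpha rho (map_edges D alpha) = 1 - int (card (map_verts D rho))"
proof -
  have "dual_rel D alpha rho (map_edges D alpha) = {}" unfolding dual_rel_def map_edges_def by auto
  then have k: "ks D alpha rho (map_edges D alpha) = card (map_faces D alpha rho)"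
    unfolding ks_def dual_clusters_def using quotient_empty by metis
  have DU: "D \<noteq> {}" using cm unfolding comb_map_def by blast
  have "kk D alpha rho (map_edges D alpha) = 1" unfolding kk_def clusters_def
  proof (rule quotient_connected[OF primal_sub[OF cm]])
    show "map_verts D rho \<noteq> {}" unfolding map_verts_def using DU by simp
    fix a b assume "a \<in> map_verts D rho" "b \<in> map_verts D rho"
    then obtain x y where "x \<in> D" "y \<in> D" "a = orb rho x" "b = orb rho y"
      unfolding map_verts_def by blast
    then show "(a, b) \<in> (primal_rel D alpha rho (map_edges D alpha))\<^sup>*" using primal_conn[OF cm] by simp
  qed
  then show ?thesis unfolding FF_def using k g unfolding genus_zero_def by simp
qed

lemma euler:
  assumes cm: "comb_map D alpha rho" and g: "genus_zero D alpha rho" and w: "\<omega> \<subseteq> map_edges D alpha"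
  shows "ks D alpha rho \<omega> + card (map_verts D rho) = kk D alpha rho \<omega> + card \<omega> + 1"
proof -
  have fE: "finite (map_edges D alpha)" using fin_edges[OF cm] .
  have "FF D alpha rho (map_edges D alpha) = FF D alpha rho (\<omega> \<union> (map_edges D alpha - \<omega>))"
    using w by (simp add: Un_absorb1 Un_Diff_cancel)
  also have "\<dots> \<le> FF D alpha rho \<omega>" using FF_mono[OF cm _ _ w] fE by simp
  finally have 1: "FF D alpha rho (map_edges D alpha) \<le> FF D alpha rho \<omega>" .
  have "FF D alpha rho \<omega> = FF D alpha rho ({} \<union> \<omega>)" by simp
  also have "\<dots> \<le> FF D alpha rho {}" using FF_mono[OF cm _ w] fE w finite_subset by blast
  finally have 2: "FF D alpha rho \<omega> \<le> FF D alpha rho {}" .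
  from 1 2 FF_empty[OF cm] FF_full[OF cm g] have "FF D alpha rho \<omega> = 1 - int (card (map_verts D rho))" by simp
  then show ?thesis unfolding FF_def by simp
qed



lemma rtrancl_const: "(a,b) \<in> R\<^sup>* \<Longrightarrow> (\<And>x y. (x,y) \<in> R \<Longrightarrow> s x = s y) \<Longrightarrow> s a = s b"
  by (induction rule: rtrancl_induct) auto

lemma const_quot_iff:
  assumes sub: "R \<subseteq> V \<times> V"
  shows "const_on_clusters s (V // R\<^sup>*) \<longleftrightarrow> (\<forall>(x,y)\<in>R. s x = s y)"
proof
  assume c: "const_on_clusters s (V // R\<^sup>*)"
  show "\<forall>(x,y)\<in>R. s x = s y"
  proof (clarify)
    fix x y assume xy: "(x,y) \<in> R"
    then have "x \<in> V" using sub by auto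
    then have "R\<^sup>*``{x} \<in> V // R\<^sup>*" unfolding quotient_image by simp
    moreover have "x \<in> R\<^sup>*``{x}" "y \<in> R\<^sup>*``{x}" using xy by auto
    ultimately show "s x = s y" using c unfolding const_on_clusters_def by blast
  qed
next
  assume h: "\<forall>(x,y)\<in>R. s x = s y"
  show "const_on_clusters s (V // R\<^sup>*)"
    unfolding const_on_clusters_def quotient_image
  proof (clarify)
    fix v x y assume "(v,x) \<in> R\<^sup>*" "(v,y) \<in> R\<^sup>*"
    then have "s v = s x" "s v = s y" using rtrancl_const[of _ _ R s] h by blast+
    then show "s x = s y" by simp
  qed
qed

lemma const_primal:
  assumes cm: "comb_map D alpha rho"
  shows "const_on_clusters \<sigma> (clusters D alpha rho \<omega>) \<longleftrightarrow> \<omega> \<inter> eta_primal D alpha rho \<sigma> = {}"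
proof -
  have "const_on_clusters \<sigma> (clusters D alpha rho \<omega>) \<longleftrightarrow> (\<forall>(x,y)\<in>primal_rel D alpha rho \<omega>. \<sigma> x = \<sigma> y)"
    unfolding clusters_def by (rule const_quot_iff[OF primal_sub[OF cm]])
  also have "\<dots> \<longleftrightarrow> \<omega> \<inter> eta_primal D alpha rho \<sigma> = {}"
    unfolding primal_rel_def eta_primal_def by blast
  finally show ?thesis .
qed

lemma const_dual:
  assumes cm: "comb_map D alpha rho"
  shows "const_on_clusters \<sigma> (dual_clusters D alpha rho \<omega>) \<longleftrightarrow> eta_dual D alpha rho \<sigma> \<subseteq> \<omega>"
proof -
  have "const_on_clusters \<sigma> (dual_clusters D alpha rho \<omega>) \<longleftrightarrow> (\<forall>(x,y)\<in>dual_rel D alpha rho \<omega>. \<sigma> x = \<sigma> y)"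
    unfolding dual_clusters_def by (rule const_quot_iff[OF dual_sub[OF cm]])
  also have "\<dots> \<longleftrightarrow> eta_dual D alpha rho \<sigma> \<subseteq> \<omega>"
    unfolding dual_rel_def eta_dual_def by blast
  finally show ?thesis .
qed

lemma count_const:
  assumes finV: "finite V" and finQ: "finite Q"
    and cl1: "\<And>v. v \<in> V \<Longrightarrow> v \<in> r``{v}" and cl2: "\<And>v. v \<in> V \<Longrightarrow> r``{v} \<subseteq> V"
    and eqc: "\<And>v x. v \<in> V \<Longrightarrow> x \<in> r``{v} \<Longrightarrow> r``{x} = r``{v}"
  shows "card {\<sigma> \<in> V \<rightarrow>\<^sub>E Q. const_on_clusters \<sigma> (V // r)} = card Q ^ card (V // r)"
proof -
  let ?C = "V // r"
  define h where "h g = (\<lambda>v. if v \<in> V then g (r``{v}) else undefined)" for g :: "'a set set \<Rightarrow> complex"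
  have Cc: "c \<in> ?C \<longleftrightarrow> (\<exists>v\<in>V. c = r``{v})" for c unfolding quotient_image by auto
  have inj: "inj_on h (?C \<rightarrow>\<^sub>E Q)"
  proof (rule inj_onI)
    fix g1 g2 assume g: "g1 \<in> ?C \<rightarrow>\<^sub>E Q" "g2 \<in> ?C \<rightarrow>\<^sub>E Q" "h g1 = h g2"
    show "g1 = g2"
    proof
      fix c show "g1 c = g2 c"
      proof (cases "c \<in> ?C")
        case True
        then obtain v where v: "v \<in> V" "c = r``{v}" using Cc by blast
        have "h g1 v = h g2 v" using g(3) by simp
        then show ?thesis using v unfolding h_def by simp
      next
        case False
        then have "g1 c = undefined" "g2 c = undefined" using PiE_arb[of g1 ?C "\<lambda>_. Q" c] PiE_arb[of g2 ?C "\<lambda>_. Q" c] g(1,2) by blast+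
        then show ?thesis by simp
      qed
    qed
  qed
  have img: "h ` (?C \<rightarrow>\<^sub>E Q) = {\<sigma> \<in> V \<rightarrow>\<^sub>E Q. const_on_clusters \<sigma> ?C}"
  proof
    show "h ` (?C \<rightarrow>\<^sub>E Q) \<subseteq> {\<sigma> \<in> V \<rightarrow>\<^sub>E Q. const_on_clusters \<sigma> ?C}"
    proof
      fix s assume "s \<in> h ` (?C \<rightarrow>\<^sub>E Q)"
      then obtain g where g: "g \<in> ?C \<rightarrow>\<^sub>E Q" "s = h g" by blast
      have "s \<in> V \<rightarrow>\<^sub>E Q"
      proof (rule PiE_I)
        fix v assume "v \<in> V"
        then have "r``{v} \<in> ?C" using Cc by blast
        then show "s v \<in> Q" using g \<open>v \<in> V\<close> unfolding h_def by auto
      next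
        fix v assume "v \<notin> V" then show "s v = undefined" using g unfolding h_def by simp
      qed
      moreover have "const_on_clusters s ?C" unfolding const_on_clusters_def
      proof (intro ballI)
        fix c x y assume c: "c \<in> ?C" and xy: "x \<in> c" "y \<in> c"
        then obtain w where w: "w \<in> V" "c = r``{w}" using Cc by blast
        have "x \<in> V" "y \<in> V" using cl2[OF w(1)] xy w by auto
        moreover have "r``{x} = c" "r``{y} = c" using eqc[OF w(1)] xy w by auto
        ultimately show "s x = s y" using g unfolding h_def by simp
      qed
      ultimately show "s \<in> {\<sigma> \<in> V \<rightarrow>\<^sub>E Q. const_on_clusters \<sigma> ?C}" by simp
    qed
    show "{\<sigma> \<in> V \<rightarrow>\<^sub>E Q. const_on_clusters \<sigma> ?C} \<subseteq> h ` (?C \<rightarrow>\<^sub>E Q)"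
    proof
      fix s assume s: "s \<in> {\<sigma> \<in> V \<rightarrow>\<^sub>E Q. const_on_clusters \<sigma> ?C}"
      define g where "g c = (if c \<in> ?C then s (SOME v. v \<in> c) else undefined)" for c
      have some: "c \<in> ?C \<Longrightarrow> (SOME v. v \<in> c) \<in> c" for c
        using Cc cl1 by (metis someI)
      have gQ: "g \<in> ?C \<rightarrow>\<^sub>E Q"
      proof (rule PiE_I)
        fix c assume c: "c \<in> ?C"
        then obtain w where w: "w \<in> V" "c = r``{w}" using Cc by blast
        have "(SOME v. v \<in> c) \<in> V" using some[OF c] cl2[OF w(1)] w by auto
        then show "g c \<in> Q" using s c unfolding g_def by auto
      next
        fix c assume "c \<notin> ?C" then show "g c = undefined" unfolding g_def by simp
      qed
      have "h g = s"
      proof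
        fix v show "h g v = s v"
        proof (cases "v \<in> V")
          case True
          then have c: "r``{v} \<in> ?C" using Cc by blast
          have cs: "const_on_clusters s ?C" using s by simp
          have "\<forall>x\<in>r``{v}. \<forall>y\<in>r``{v}. s x = s y" using cs c unfolding const_on_clusters_def by (rule bspec)
          then have "s (SOME x. x \<in> r``{v}) = s v"
            using some[OF c] cl1[OF True] by blast
          then show ?thesis using True c unfolding h_def g_def by simp
        next
          case False
          have "s \<in> V \<rightarrow>\<^sub>E Q" using s by simp
          then have "s v = undefined" using PiE_arb[of s V "\<lambda>_. Q" v] False by blast
          then show ?thesis using False unfolding h_def by simp
        qed
      qed
      then show "s \<in> h ` (?C \<rightarrow>\<^sub>E Q)" using gQ by blast
    qed
  qed
  have finC: "finite ?C" unfolding quotient_image using finV by simp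
  have "card {\<sigma> \<in> V \<rightarrow>\<^sub>E Q. const_on_clusters \<sigma> ?C} = card (?C \<rightarrow>\<^sub>E Q)"
    using img card_image[OF inj] by simp
  also have "\<dots> = card Q ^ card ?C" using card_PiE[OF finC, of "\<lambda>_. Q"] by simp
  finally show ?thesis .
qed

lemma binom_sets:
  fixes a b :: real
  assumes fE: "finite E" and A: "A \<subseteq> E" and B: "B \<subseteq> E" and ab: "a + b = 1"
  shows "(\<Sum>\<omega>\<in>Pow E. if \<omega> \<inter> B = {} \<and> A \<subseteq> \<omega> then a ^ card \<omega> * b ^ card (E - \<omega>) else 0)
       = (if A \<inter> B = {} then a ^ card A * b ^ card B else 0)"
proof -
  define f1 where "f1 x = (if x \<in> B then 0 else a)" for x
  define f2 where "f2 x = (if x \<in> A then 0 else b)" for x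
  have fin: "finite X" if "X \<subseteq> E" for X by (rule finite_subset[OF that fE])
  have p1: "prod f1 \<omega> = (if \<omega> \<inter> B = {} then a ^ card \<omega> else 0)" if "\<omega> \<subseteq> E" for \<omega>
  proof (cases "\<omega> \<inter> B = {}")
    case True
    then have "prod f1 \<omega> = prod (\<lambda>_. a) \<omega>" unfolding f1_def by (intro prod.cong) auto
    then show ?thesis using True by simp
  next
    case False
    then obtain x where "x \<in> \<omega>" "x \<in> B" by blast
    moreover have "f1 x = 0" using \<open>x \<in> B\<close> by (simp add: f1_def)
    ultimately have "prod f1 \<omega> = 0" using prod_zero_iff[OF fin[OF that], of f1] by blast
    then show ?thesis using False by simp
  qed
  have p2: "prod f2 (E - \<omega>) = (if A \<subseteq> \<omega> then b ^ card (E - \<omega>) else 0)" if "\<omega> \<subseteq> E" for \<omega>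
  proof (cases "A \<subseteq> \<omega>")
    case True
    then have "prod f2 (E - \<omega>) = prod (\<lambda>_. b) (E - \<omega>)" unfolding f2_def by (intro prod.cong) auto
    then show ?thesis using True by simp
  next
    case False
    then obtain x where "x \<in> A" "x \<notin> \<omega>" by blast
    then have "x \<in> E - \<omega>" using A by blast
    moreover have "f2 x = 0" using \<open>x \<in> A\<close> by (simp add: f2_def)
    ultimately have "prod f2 (E - \<omega>) = 0" using prod_zero_iff[of "E - \<omega>" f2] fE by blast
    then show ?thesis using False by simp
  qed
  have "(\<Sum>\<omega>\<in>Pow E. if \<omega> \<inter> B = {} \<and> A \<subseteq> \<omega> then a ^ card \<omega> * b ^ card (E - \<omega>) else 0)
      = (\<Sum>\<omega>\<in>Pow E. prod f1 \<omega> * prod f2 (E - \<omega>))"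
    by (intro sum.cong) (auto simp: p1 p2)
  also have "\<dots> = (\<Prod>x\<in>E. f1 x + f2 x)" using prod_add[OF fE, of f1 f2] by simp
  also have "\<dots> = (if A \<inter> B = {} then a ^ card A * b ^ card B else 0)"
  proof (cases "A \<inter> B = {}")
    case False
    then obtain x where x: "x \<in> A" "x \<in> B" by blast
    then have "f1 x + f2 x = 0" unfolding f1_def f2_def by simp
    then have "(\<Prod>x\<in>E. f1 x + f2 x) = 0" using prod_zero_iff[OF fE, of "\<lambda>x. f1 x + f2 x"] x A by blast
    then show ?thesis using False by simp
  next
    case True
    define g where "g x = (if x \<in> A then a else if x \<in> B then b else 1)" for x
    have "(\<Prod>x\<in>E. f1 x + f2 x) = prod g E"
      using True ab unfolding f1_def f2_def g_def by (intro prod.cong) auto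
    also have "\<dots> = prod g (E - A) * prod g A" using prod.subset_diff[OF A fE] .
    also have "prod g A = a ^ card A" unfolding g_def by simp
    also have "prod g (E - A) = prod g ((E - A) - B) * prod g B"
      using prod.subset_diff[of B "E - A" g] B True fE by blast
    also have "prod g B = prod (\<lambda>_. b) B" using True unfolding g_def by (intro prod.cong) auto
    also have "\<dots> = b ^ card B" by simp
    also have "prod g ((E - A) - B) = 1" unfolding g_def by simp
    finally show ?thesis using True by simp
  qed
  finally show ?thesis .
qed

lemma sum_if_card: "finite A \<Longrightarrow> (\<Sum>x\<in>A. if P x then c else 0) = (c::'b::comm_semiring_1) * of_nat (card {x\<in>A. P x})"
  by (simp add: sum.inter_filter[symmetric] mult.commute)



lemma count_rtrancl:
  assumes "finite V" "finite Q" "R \<subseteq> V \<times> V" "sym R"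
  shows "card {\<sigma> \<in> V \<rightarrow>\<^sub>E Q. const_on_clusters \<sigma> (V // R\<^sup>*)} = card Q ^ card (V // R\<^sup>*)"
proof (rule count_const[OF assms(1,2)])
  fix v assume "v \<in> V"
  show "v \<in> R\<^sup>*``{v}" by simp
  show "R\<^sup>*``{v} \<subseteq> V" using rtrancl_stays[OF _ assms(3) \<open>v \<in> V\<close>] by blast
next
  fix v x assume "v \<in> V" "x \<in> R\<^sup>*``{v}"
  then have vx: "(v,x) \<in> R\<^sup>*" by simp
  have xv: "(x,v) \<in> R\<^sup>*" using vx sym_rtrancl[OF assms(4)] by (meson symD)
  show "R\<^sup>*``{x} = R\<^sup>*``{v}"
    using rtrancl_trans[OF vx] rtrancl_trans[OF xv] by blast
qed

lemma p_facts:
  fixes a p :: real and q' :: nat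
  assumes a: "0 < a" "a < 1" and q': "q' \<ge> 1" and p: "p = real q' / (real q' + 1 / a - 1)"
  defines "c \<equiv> 1 / (a * (real q' + 1 / a - 1))"
  shows "p = real q' * a * c" "1 - p = (1 - a) * c" "c > 0"
proof -
  have ia: "1 / a > 1" using a by simp
  define D0 where "D0 = real q' + 1 / a - 1"
  have D0: "D0 > 0" unfolding D0_def using ia q' by simp
  have c: "c = 1 / (a * D0)" unfolding c_def D0_def ..
  have pp: "p = real q' / D0" unfolding p D0_def ..
  show "p = real q' * a * c" unfolding pp c using a D0 by simp
  have "1 - p = (D0 - real q') / D0" unfolding pp using D0 by (simp add: field_simps)
  also have "D0 - real q' = (1 - a) / a" unfolding D0_def using a by (simp add: field_simps)
  finally show "1 - p = (1 - a) * c" unfolding c using a D0 by simp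
  show "c > 0" unfolding c using a D0 by simp
qed



theorem corollary2p3:
  fixes D :: "'d set" and alpha rho :: "'d \<Rightarrow> 'd"
    and Q Q' :: "complex set" and q q' :: nat and a b p :: real
  assumes map: "comb_map D alpha rho"
    and genus: "genus_zero D alpha rho"
    and q: "q \<ge> 1" and q': "q' \<ge> 1"
    and Q: "finite Q" "card Q = q" "uminus ` Q = Q"
    and Q': "finite Q'" "card Q' = q'" "uminus ` Q' = Q'"
    and a: "0 < a" "a < 1"
    and b: "b = 1 - a"
    and p: "p = real q' / (real q' + 1 / a - 1)"
  shows "\<forall>\<sigma> \<in> map_verts D rho \<rightarrow>\<^sub>E Q. \<forall>\<sigma>' \<in> map_faces D alpha rho \<rightarrow>\<^sub>E Q'.
           coupled_law D alpha rho q q' p \<sigma> \<sigma>' =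
           (if in_Sigma D alpha rho \<sigma> \<sigma>'
            then a ^ card (eta_dual D alpha rho \<sigma>') * b ^ card (eta_primal D alpha rho \<sigma>)
                 / (\<Sum>(\<tau>, \<tau>') \<in> {(\<tau>, \<tau>'). \<tau> \<in> map_verts D rho \<rightarrow>\<^sub>E Q \<and>
                                        \<tau>' \<in> map_faces D alpha rho \<rightarrow>\<^sub>E Q' \<and> in_Sigma D alpha rho \<tau> \<tau>'}.
                      a ^ card (eta_dual D alpha rho \<tau>') * b ^ card (eta_primal D alpha rho \<tau>))
            else 0)"
proof (intro ballI)
  fix \<sigma> \<sigma>' assume sQ: "\<sigma> \<in> map_verts D rho \<rightarrow>\<^sub>E Q" and sQ': "\<sigma>' \<in> map_faces D alpha rho \<rightarrow>\<^sub>E Q'"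
  define E where "E = map_edges D alpha"
  define V where "V = map_verts D rho"
  define U where "U = map_faces D alpha rho"
  define VQ where "VQ = V \<rightarrow>\<^sub>E Q"
  define UQ where "UQ = U \<rightarrow>\<^sub>E Q'"
  define c where "c = 1 / (a * (real q' + 1 / a - 1))"
  define K where "K = real q' ^ card V / real q' * c ^ card E"
  define wt where "wt \<omega> = a ^ card \<omega> * b ^ card (E - \<omega>)" for \<omega> :: "'d set set"
  define Bf where "Bf \<tau> = eta_primal D alpha rho \<tau>" for \<tau>
  define Af where "Af \<tau> = eta_dual D alpha rho \<tau>" for \<tau>
  define k1 where "k1 \<omega> = kk D alpha rho \<omega>" for \<omega>
  define k2 where "k2 \<omega> = ks D alpha rho \<omega>" for \<omega>
  define S' where "S' = (\<Sum>\<omega>\<in>Pow E. real q ^ k1 \<omega> * real q' ^ k2 \<omega> * wt \<omega>)"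
  define Z where "Z = (\<Sum>\<omega>\<in>Pow E. fk_weight D alpha rho (real q * real q') p \<omega>)"
  have finE: "finite E" unfolding E_def using fin_edges[OF map] .
  have finV: "finite V" unfolding V_def using fin_verts[OF map] .
  have finU: "finite U" unfolding U_def using fin_faces[OF map] .
  have finVQ: "finite VQ" unfolding VQ_def using finV Q(1) by (simp add: finite_PiE)
  have finUQ: "finite UQ" unfolding UQ_def using finU Q'(1) by (simp add: finite_PiE)
  have pc: "p = real q' * a * c" "1 - p = b * c" "c > 0"
    using p_facts[OF a q' p] b unfolding c_def by auto
  have qpos: "real q > 0" "real q' > 0" using q q' by auto
  have Kne: "K \<noteq> 0" unfolding K_def using qpos pc(3) by simp
  have ab: "a + b = 1" using b by simp
  have BE: "Bf \<tau> \<subseteq> E" for \<tau> unfolding Bf_def E_def eta_primal_def map_edges_def by blast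
  have AE: "Af \<tau> \<subseteq> E" for \<tau> unfolding Af_def E_def eta_dual_def map_edges_def by blast
  have W: "fk_weight D alpha rho (real q * real q') p \<omega> = K * (real q ^ k1 \<omega> * real q' ^ k2 \<omega> * wt \<omega>)"
    if w: "\<omega> \<subseteq> E" for \<omega>
  proof -
    define n where "n = card \<omega>"
    define m where "m = card (E - \<omega>)"
    have fw: "finite \<omega>" using finite_subset[OF w finE] .
    have nm: "n + m = card E" unfolding n_def m_def using card_Diff_subset[OF fw w] card_mono[OF finE w] by simp
    have eu: "k2 \<omega> + card V = k1 \<omega> + n + 1"
      unfolding k1_def k2_def V_def n_def using euler[OF map genus] w unfolding E_def by simp
    have pw: "real q' ^ (k1 \<omega> + n) * real q' = real q' ^ k2 \<omega> * real q' ^ card V"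
      by (metis eu power_add power_Suc2 add_Suc_right add.right_neutral Suc_eq_plus1)
    have "fk_weight D alpha rho (real q * real q') p \<omega> =
          (real q * real q') ^ k1 \<omega> * (real q' * a * c) ^ n * (b * c) ^ m"
      unfolding fk_weight_def k1_def kk_def n_def m_def E_def pc(1) pc(2)[symmetric] by simp
    also have "\<dots> = real q ^ k1 \<omega> * (real q' ^ (k1 \<omega> + n) * real q') / real q' * a ^ n * b ^ m * c ^ (n + m)"
      using qpos by (simp add: power_mult_distrib power_add)
    also have "\<dots> = real q ^ k1 \<omega> * (real q' ^ k2 \<omega> * real q' ^ card V) / real q' * a ^ n * b ^ m * c ^ card E"
      unfolding pw nm ..
    also have "\<dots> = K * (real q ^ k1 \<omega> * real q' ^ k2 \<omega> * wt \<omega>)"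
      unfolding K_def wt_def n_def m_def by (simp add: field_simps)
    finally show ?thesis .
  qed
  have Z: "Z = K * S'"
    unfolding Z_def S'_def by (simp add: sum_distrib_left W)
  have csp1: "cluster_spin_prob q (clusters D alpha rho \<omega>) \<tau> = (if \<omega> \<inter> Bf \<tau> = {} then 1 / real q ^ k1 \<omega> else 0)" for \<omega> \<tau>
    unfolding cluster_spin_prob_def const_primal[OF map] Bf_def k1_def kk_def ..
  have csp2: "cluster_spin_prob q' (dual_clusters D alpha rho \<omega>) \<tau> = (if Af \<tau> \<subseteq> \<omega> then 1 / real q' ^ k2 \<omega> else 0)" for \<omega> \<tau>
    unfolding cluster_spin_prob_def const_dual[OF map] Af_def k2_def ks_def ..
  have "coupled_law D alpha rho q q' p \<sigma> \<sigma>' =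
        (\<Sum>\<omega>\<in>Pow E. K / Z * (if \<omega> \<inter> Bf \<sigma> = {} \<and> Af \<sigma>' \<subseteq> \<omega> then wt \<omega> else 0))"
    unfolding coupled_law_def E_def[symmetric]
  proof (rule sum.cong[OF refl])
    fix \<omega> assume "\<omega> \<in> Pow E"
    then have w: "\<omega> \<subseteq> E" by simp
    show "fk_prob D alpha rho (real q * real q') p \<omega> * cluster_spin_prob q (clusters D alpha rho \<omega>) \<sigma> *
          cluster_spin_prob q' (dual_clusters D alpha rho \<omega>) \<sigma>' =
          K / Z * (if \<omega> \<inter> Bf \<sigma> = {} \<and> Af \<sigma>' \<subseteq> \<omega> then wt \<omega> else 0)"
      unfolding csp1 csp2 fk_prob_def E_def[symmetric] Z_def[symmetric] W[OF w]
      using qpos by (simp add: field_simps)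
  qed
  also have "\<dots> = K / Z * (\<Sum>\<omega>\<in>Pow E. if \<omega> \<inter> Bf \<sigma> = {} \<and> Af \<sigma>' \<subseteq> \<omega> then wt \<omega> else 0)"
    by (simp add: sum_distrib_left)
  also have "(\<Sum>\<omega>\<in>Pow E. if \<omega> \<inter> Bf \<sigma> = {} \<and> Af \<sigma>' \<subseteq> \<omega> then wt \<omega> else 0)
      = (if Af \<sigma>' \<inter> Bf \<sigma> = {} then a ^ card (Af \<sigma>') * b ^ card (Bf \<sigma>) else 0)"
    unfolding wt_def by (rule binom_sets[OF finE AE BE ab])
  finally have law: "coupled_law D alpha rho q q' p \<sigma> \<sigma>' =
      K / Z * (if in_Sigma D alpha rho \<sigma> \<sigma>' then a ^ card (Af \<sigma>') * b ^ card (Bf \<sigma>) else 0)"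
    unfolding in_Sigma_def Af_def Bf_def by (simp add: Int_commute)
  define wS where "wS \<tau> \<tau>' = a ^ card (Af \<tau>') * b ^ card (Bf \<tau>)" for \<tau> \<tau>'
  have setP: "{(\<tau>, \<tau>'). \<tau> \<in> map_verts D rho \<rightarrow>\<^sub>E Q \<and> \<tau>' \<in> map_faces D alpha rho \<rightarrow>\<^sub>E Q' \<and> in_Sigma D alpha rho \<tau> \<tau>'}
      = {x \<in> VQ \<times> UQ. in_Sigma D alpha rho (fst x) (snd x)}"
    unfolding VQ_def UQ_def V_def U_def by auto
  have "(\<Sum>(\<tau>, \<tau>') \<in> {(\<tau>, \<tau>'). \<tau> \<in> map_verts D rho \<rightarrow>\<^sub>E Q \<and>
                                        \<tau>' \<in> map_faces D alpha rho \<rightarrow>\<^sub>E Q' \<and> in_Sigma D alpha rho \<tau> \<tau>'}.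
                      a ^ card (eta_dual D alpha rho \<tau>') * b ^ card (eta_primal D alpha rho \<tau>))
      = (\<Sum>x \<in> {x \<in> VQ \<times> UQ. in_Sigma D alpha rho (fst x) (snd x)}. wS (fst x) (snd x))"
    unfolding setP wS_def Af_def Bf_def by (intro sum.cong) auto
  also have "\<dots> = (\<Sum>x \<in> VQ \<times> UQ. if in_Sigma D alpha rho (fst x) (snd x) then wS (fst x) (snd x) else 0)"
    using finVQ finUQ by (simp add: sum.inter_filter)
  also have "\<dots> = (\<Sum>\<tau>\<in>VQ. \<Sum>\<tau>'\<in>UQ. if in_Sigma D alpha rho \<tau> \<tau>' then wS \<tau> \<tau>' else 0)"
    by (simp add: sum.cartesian_product split_beta)
  also have "\<dots> = (\<Sum>\<tau>\<in>VQ. \<Sum>\<tau>'\<in>UQ. \<Sum>\<omega>\<in>Pow E. if \<omega> \<inter> Bf \<tau> = {} \<and> Af \<tau>' \<subseteq> \<omega> then wt \<omega> else 0)"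
  proof (intro sum.cong refl)
    fix \<tau> \<tau>'
    show "(if in_Sigma D alpha rho \<tau> \<tau>' then wS \<tau> \<tau>' else 0) =
          (\<Sum>\<omega>\<in>Pow E. if \<omega> \<inter> Bf \<tau> = {} \<and> Af \<tau>' \<subseteq> \<omega> then wt \<omega> else 0)"
      using binom_sets[OF finE AE[of \<tau>'] BE[of \<tau>] ab]
      unfolding wt_def wS_def in_Sigma_def Af_def Bf_def by (simp add: Int_commute)
  qed
  also have "\<dots> = (\<Sum>\<omega>\<in>Pow E. \<Sum>\<tau>\<in>VQ. \<Sum>\<tau>'\<in>UQ. if \<omega> \<inter> Bf \<tau> = {} \<and> Af \<tau>' \<subseteq> \<omega> then wt \<omega> else 0)"
    by (subst sum.swap) (simp add: sum.swap[of _ UQ])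
  also have "\<dots> = (\<Sum>\<omega>\<in>Pow E. wt \<omega> * real (card {\<tau>'\<in>UQ. Af \<tau>' \<subseteq> \<omega>}) * real (card {\<tau>\<in>VQ. \<omega> \<inter> Bf \<tau> = {}}))"
  proof (intro sum.cong refl)
    fix \<omega>
    have "(\<Sum>\<tau>'\<in>UQ. if \<omega> \<inter> Bf \<tau> = {} \<and> Af \<tau>' \<subseteq> \<omega> then wt \<omega> else 0) =
          (if \<omega> \<inter> Bf \<tau> = {} then wt \<omega> * real (card {\<tau>'\<in>UQ. Af \<tau>' \<subseteq> \<omega>}) else 0)" for \<tau>
      using sum_if_card[OF finUQ, of "\<lambda>\<tau>'. Af \<tau>' \<subseteq> \<omega>" "wt \<omega>"] by auto
    then have "(\<Sum>\<tau>\<in>VQ. \<Sum>\<tau>'\<in>UQ. if \<omega> \<inter> Bf \<tau> = {} \<and> Af \<tau>' \<subseteq> \<omega> then wt \<omega> else 0) =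
          (\<Sum>\<tau>\<in>VQ. if \<omega> \<inter> Bf \<tau> = {} then wt \<omega> * real (card {\<tau>'\<in>UQ. Af \<tau>' \<subseteq> \<omega>}) else 0)" by simp
    also have "\<dots> = wt \<omega> * real (card {\<tau>'\<in>UQ. Af \<tau>' \<subseteq> \<omega>}) * real (card {\<tau>\<in>VQ. \<omega> \<inter> Bf \<tau> = {}})"
      by (rule sum_if_card[OF finVQ])
    finally show "(\<Sum>\<tau>\<in>VQ. \<Sum>\<tau>'\<in>UQ. if \<omega> \<inter> Bf \<tau> = {} \<and> Af \<tau>' \<subseteq> \<omega> then wt \<omega> else 0) =
          wt \<omega> * real (card {\<tau>'\<in>UQ. Af \<tau>' \<subseteq> \<omega>}) * real (card {\<tau>\<in>VQ. \<omega> \<inter> Bf \<tau> = {}})" .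
  qed
  also have "\<dots> = S'"
    unfolding S'_def
  proof (intro sum.cong refl)
    fix \<omega>
    have c1: "card {\<tau>\<in>VQ. \<omega> \<inter> Bf \<tau> = {}} = q ^ k1 \<omega>"
    proof -
      have "{\<tau>\<in>VQ. \<omega> \<inter> Bf \<tau> = {}} = {\<tau>\<in>V \<rightarrow>\<^sub>E Q. const_on_clusters \<tau> (V // (primal_rel D alpha rho \<omega>)\<^sup>*)}"
        unfolding VQ_def Bf_def V_def const_primal[OF map, symmetric] clusters_def ..
      also have "card \<dots> = card Q ^ card (V // (primal_rel D alpha rho \<omega>)\<^sup>*)"
        using count_rtrancl[OF finV Q(1)] primal_sub[OF map] primal_sym[OF map] unfolding V_def by blast
      finally show ?thesis unfolding k1_def kk_def clusters_def V_def Q(2) .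
    qed
    have c2: "card {\<tau>'\<in>UQ. Af \<tau>' \<subseteq> \<omega>} = q' ^ k2 \<omega>"
    proof -
      have "{\<tau>\<in>UQ. Af \<tau> \<subseteq> \<omega>} = {\<tau>\<in>U \<rightarrow>\<^sub>E Q'. const_on_clusters \<tau> (U // (dual_rel D alpha rho \<omega>)\<^sup>*)}"
        unfolding UQ_def Af_def U_def const_dual[OF map, symmetric] dual_clusters_def ..
      also have "card \<dots> = card Q' ^ card (U // (dual_rel D alpha rho \<omega>)\<^sup>*)"
        using count_rtrancl[OF finU Q'(1)] dual_sub[OF map] dual_sym[OF map] unfolding U_def by blast
      finally show ?thesis unfolding k2_def ks_def dual_clusters_def U_def Q'(2) .
    qed
    show "wt \<omega> * real (card {\<tau>'\<in>UQ. Af \<tau>' \<subseteq> \<omega>}) * real (card {\<tau>\<in>VQ. \<omega> \<inter> Bf \<tau> = {}}) =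
          real q ^ k1 \<omega> * real q' ^ k2 \<omega> * wt \<omega>"
      unfolding c1 c2 by simp
  qed
  finally have Ssum: "(\<Sum>(\<tau>, \<tau>') \<in> {(\<tau>, \<tau>'). \<tau> \<in> map_verts D rho \<rightarrow>\<^sub>E Q \<and>
                                        \<tau>' \<in> map_faces D alpha rho \<rightarrow>\<^sub>E Q' \<and> in_Sigma D alpha rho \<tau> \<tau>'}.
                      a ^ card (eta_dual D alpha rho \<tau>') * b ^ card (eta_primal D alpha rho \<tau>)) = S'" .
  show "coupled_law D alpha rho q q' p \<sigma> \<sigma>' =
           (if in_Sigma D alpha rho \<sigma> \<sigma>'
            then a ^ card (eta_dual D alpha rho \<sigma>') * b ^ card (eta_primal D alpha rho \<sigma>)
                 / (\<Sum>(\<tau>, \<tau>') \<in> {(\<tau>, \<tau>'). \<tau> \<in> map_verts D rho \<rightarrow>\<^sub>E Q \<and>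
                                        \<tau>' \<in> map_faces D alpha rho \<rightarrow>\<^sub>E Q' \<and> in_Sigma D alpha rho \<tau> \<tau>'}.
                      a ^ card (eta_dual D alpha rho \<tau>') * b ^ card (eta_primal D alpha rho \<tau>))
            else 0)"
    unfolding Ssum law Z Af_def Bf_def using Kne by simp
qed

end
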